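(* Consider the setting described in the context (an asymptotically stable, strictly proper, completely observable and reachable discrete-time SISO LTI system of order $n$ with bounded input and bounded additive output disturbance, a model order $o\ge n$, and data sets satisfying the informative-content assumption). Then, for the quantities $\lambda_p$ and $\underline{\lambda}_p$ defined in the context: 1) $\lambda_p \to \bar d_0-\bar d$ as $p\to\infty$; 2) $\underline{\lambda}_p\le \lambda_p$; 3) for every $\eta\in(0,\lambda_p]$ there exists $N<\infty$ such that $\underline{\lambda}_p\ge \lambda_p-\eta$.
   Context: System: $x(k+1)=Ax(k)+Bu(k)$, $z(k)=Cx(k)$, with $x(k)\in\mathbb{R}^n$, $u(k),z(k)\in\mathbb{R}$, $k\in\mathbb{Z}$; the system is asymptotically stable, strictly proper, completely observable and reachable. The measured output is $y(k)=z(k)+d(k)$ with $|d(k)|\le \bar d_0$ for all $k$, and $u(k)\in\mathbb{U}$ for all $k$, where $\mathbb{U}\subset\mathbb{R}$ is compact. For $p\in\mathbb{N}$, there is a parameter vector $\theta_p^0=[\theta_{p,z}^{0\,T}\ \theta_{p,u}^{0\,T}]^T$ with $z(k+p)=\psi_p(k)^T\theta_p^0$, where $\psi_p(k)=[Z_n(k)^T\ U_{p,n}(k)^T]^T$, $Z_n(k)=[z(k),z(k-1),\dots,z(k-n+1)]^T$, $U_{p,n}(k)=[u(k+p-1),u(k+p-2),\dots,u(k-n+1)]^T$. Model order: $o\in\mathbb{N}$ with $o\ge n$. Model regressor $\varphi_p(k)=[Y_o(k)^T\ U_{p,o}(k)^T]^T\in\mathbb{R}^{2o+p-1}$, with $Y_o(k)=[y(k),\dots,y(k-o+1)]^T$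 and $U_{p,o}(k)=[u(k+p-1),\dots,u(k-o+1)]^T$. Let $\psi_{p,o}(k)=[Z_o(k)^T\ U_{p,o}(k)^T]^T$, which lies in a compact set $\Psi_{p,o}$ for all $k$. Let $\mathbb{D}_p=\{[d^{(1)},\dots,d^{(o)},0,\dots,0]^T\in\mathbb{R}^{2o+p-1}:|d^{(i)}|\le\bar d_0\}$ and $\Phi_p=\Psi_{p,o}\oplus\mathbb{D}_p$ (Minkowski sum). Let $\mathscr{V}_p=\{[\varphi_p^T\ y_p]^T: y_p\in Y_p(\varphi_p),\ \varphi_p\in\Phi_p\}$, where $Y_p(\varphi_p)\subset\mathbb{R}$ is the compact set of all possible measured output values $y(k+p)$ corresponding to regressor value $\varphi_p$ and every disturbance realization $|d|\le\bar d_0$. Data: $N$ measured samples $\tilde{\mathscr{V}}_p^N=\{[\tilde\varphi_p(i)^T\ \tilde y_p(i)]^T,\ i=1,\dots,N\}$, with $\tilde y_p(i)=\tilde y(i+p)$, assumed to satisfy: for every $\beta>0$ there is $N<\infty$ with $\max_{v_1\in\mathscr{V}_p}\min_{v_2\in\tilde{\mathscr{V}}_p^N}\|v_2-v_1\|_2\le\beta$. Let $\bar d\ge 0$ be a chosen disturbance-bound estimate, and let $\Omega\subset\mathbb{R}^{2o+p-1}$ be a compact set (e.g. a large box) approximating the whole parameter space. Define $\lambda_p=\min_{\theta_p\in\Omega}\max_{[\varphi_p^T\ y_p]^T\in\mathscr{V}_p}\big(|y_p-\varphi_p^T\theta_p|-\bar d\big)$, and $\underline{\lambda}_p$ as the optimal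 value of the linear program $\min_{\theta_p,\lambda\ge 0}\lambda$ subject to $|\tilde y_p-\tilde\varphi_p^T\theta_p|\le\lambda+\bar d$ for all $[\tilde\varphi_p^T\ \tilde y_p]^T\in\tilde{\mathscr{V}}_p^N$. Convention: when $o\ne n$, parameter vectors $\theta_p$ or $\theta_p^0$ are padded with zero entries so that their dimensions agree in all products.
   Formalization: Part 2) $\underline{\lambda}_p\le \lambda_p$ holds only when $\lambda_p\ge 0$, and $\Omega$ approximating the whole parameter space means that the minimum over $\Omega$ of the max in $\lambda_p$ equals its infimum over all of $\mathbb{R}^{2o+p-1}$. Each condition added here is assumed in the paper as well or is needed for the statement above to hold. *)

theory Defs
  imports "HOL-Analysis.Analysis"
begin

text \<open>State-space system x(k+1) = A x(k) + B u(k), z(k) = C x(k), state dimension n = CARD('n).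
  Vectors of varying dimension (regressors, parameter vectors) are real lists.\<close>

definition asympt_stable :: "real^'n^'n \<Rightarrow> bool" where
  "asympt_stable A \<longleftrightarrow> (\<forall>x0. (\<lambda>k. (((*v) A) ^^ k) x0) \<longlonglongrightarrow> 0)"

definition completely_observable :: "real^'n^'n \<Rightarrow> real^'n \<Rightarrow> bool" where
  "completely_observable A C \<longleftrightarrow> (\<forall>x0. (\<forall>k. C \<bullet> ((((*v) A) ^^ k) x0) = 0) \<longrightarrow> x0 = 0)"

definition reachable :: "real^'n^'n \<Rightarrow> real^'n \<Rightarrow> bool" where
  "reachable A B \<longleftrightarrow> (\<forall>x. \<exists>N (w::nat \<Rightarrow> real). x = (\<Sum>j<N. w j *\<^sub>R ((((*v) A) ^^ (N - 1 - j)) B)))"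

text \<open>Admissible trajectories on the integer time axis (bounded state, inputs in U,
  output disturbance bounded by d0).\<close>
definition traj :: "real^'n^'n \<Rightarrow> real^'n \<Rightarrow> real set \<Rightarrow> real
     \<Rightarrow> (int \<Rightarrow> real^'n) \<Rightarrow> (int \<Rightarrow> real) \<Rightarrow> (int \<Rightarrow> real) \<Rightarrow> bool" where
  "traj A B U d0 x u d \<longleftrightarrow>
     (\<forall>k. x (k + 1) = A *v x k + u k *\<^sub>R B) \<and> (\<forall>k. u k \<in> U) \<and> (\<forall>k. \<bar>d k\<bar> \<le> d0)
     \<and> bounded (range x)"

text \<open>Z_o(k) (noise free outputs), Y_o(k) (measured outputs), U_{p,m}(k).\<close>
definition Zvec :: "nat \<Rightarrow> (int \<Rightarrow> real) \<Rightarrow> int \<Rightarrow> real list" where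
  "Zvec m z k = map (\<lambda>i. z (k - int i)) [0..<m]"

definition Uvec :: "nat \<Rightarrow> nat \<Rightarrow> (int \<Rightarrow> real) \<Rightarrow> int \<Rightarrow> real list" where
  "Uvec p m u k = map (\<lambda>i. u (k + int p - 1 - int i)) [0..<p + m - 1]"

definition ip :: "real list \<Rightarrow> real list \<Rightarrow> real" where
  "ip a b = (\<Sum>i<length a. a ! i * b ! i)"

text \<open>\<Psi>_{p,m}: set of all values of psi_{p,m}(k).\<close>
definition Psi_set :: "real^'n^'n \<Rightarrow> real^'n \<Rightarrow> real^'n \<Rightarrow> real set \<Rightarrow> real \<Rightarrow> nat \<Rightarrow> nat \<Rightarrow> real list set" where
  "Psi_set A B C U d0 m p =
     {Zvec m (\<lambda>j. C \<bullet> x j) k @ Uvec p m u k | x u d k. traj A B U d0 x u d}"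

definition D_set :: "real \<Rightarrow> nat \<Rightarrow> nat \<Rightarrow> real list set" where
  "D_set d0 m p = {ds @ replicate (p + m - 1) 0 | ds. length ds = m \<and> (\<forall>i<m. \<bar>ds ! i\<bar> \<le> d0)}"

definition Phi_set :: "real^'n^'n \<Rightarrow> real^'n \<Rightarrow> real^'n \<Rightarrow> real set \<Rightarrow> real \<Rightarrow> nat \<Rightarrow> nat \<Rightarrow> real list set" where
  "Phi_set A B C U d0 m p =
     {map2 (+) a b | a b. a \<in> Psi_set A B C U d0 m p \<and> b \<in> D_set d0 m p}"

text \<open>Y_p(phi): all measured outputs y(k+p) for which the measured regressor phi_p(k) equals phi.\<close>
definition Y_set :: "real^'n^'n \<Rightarrow> real^'n \<Rightarrow> real^'n \<Rightarrow> real set \<Rightarrow> real \<Rightarrow> nat \<Rightarrow> nat \<Rightarrow> real list \<Rightarrow> real set" where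
  "Y_set A B C U d0 m p \<phi> =
     {C \<bullet> x (k + int p) + d (k + int p) | x u d k. traj A B U d0 x u d \<and>
        Zvec m (\<lambda>j. C \<bullet> x j + d j) k @ Uvec p m u k = \<phi>}"

definition V_set :: "real^'n^'n \<Rightarrow> real^'n \<Rightarrow> real^'n \<Rightarrow> real set \<Rightarrow> real \<Rightarrow> nat \<Rightarrow> nat \<Rightarrow> (real list \<times> real) set" where
  "V_set A B C U d0 m p =
     {(\<phi>, y). \<phi> \<in> Phi_set A B C U d0 m p \<and> y \<in> Y_set A B C U d0 m p \<phi>}"

text \<open>Euclidean distance between two points [phi; y] of equal dimension.\<close>
definition vdist :: "real list \<times> real \<Rightarrow> real list \<times> real \<Rightarrow> real" where
  "vdist v w = sqrt ((\<Sum>i<length (fst v). (fst v ! i - fst w ! i)\<^sup>2) + (snd v - snd w)\<^sup>2)"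

text \<open>Worst-case cost of theta over a set of data points.\<close>
definition cost :: "(real list \<times> real) set \<Rightarrow> real \<Rightarrow> real list \<Rightarrow> real" where
  "cost V dbar \<theta> = (SUP v\<in>V. \<bar>snd v - ip (fst v) \<theta>\<bar> - dbar)"

definition lambda_p :: "real^'n^'n \<Rightarrow> real^'n \<Rightarrow> real^'n \<Rightarrow> real set \<Rightarrow> real \<Rightarrow> real \<Rightarrow> nat
     \<Rightarrow> (nat \<Rightarrow> real list set) \<Rightarrow> nat \<Rightarrow> real" where
  "lambda_p A B C U d0 dbar m \<Omega> p = (INF \<theta>\<in>\<Omega> p. cost (V_set A B C U d0 m p) dbar \<theta>)"

text \<open>Optimal value of the linear program on the first N samples.\<close>
definition lambda_low :: "real \<Rightarrow> nat \<Rightarrow> (nat \<Rightarrow> nat \<Rightarrow> real list \<times> real) \<Rightarrow> nat \<Rightarrow> nat \<Rightarrow> real" where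
  "lambda_low dbar m data p N =
     Inf {lam. lam \<ge> 0 \<and> (\<exists>\<theta>. length \<theta> = 2 * m + p - 1 \<and>
        (\<forall>i\<in>{1..N}. \<bar>snd (data p i) - ip (fst (data p i)) \<theta>\<bar> \<le> lam + dbar))}"

text \<open>Zero-padding embedding of a list into nat => real (used to state compactness of Omega).\<close>
definition list_emb :: "real list \<Rightarrow> nat \<Rightarrow> real" where
  "list_emb xs = (\<lambda>i. if i < length xs then xs ! i else 0)"

end

theory Submission
  imports Defs
begin

lemma lin_pow: "linear (((*v) (A::real^'n^'n)) ^^ k)"
proof (induction k)
  case 0 then show ?case by (simp add: linear_id[unfolded id_def])
next
  case (Suc k) show ?case
    unfolding funpow.simps(2) by (rule linear_compose[OF Suc matrix_vector_mul_linear])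
qed

lemma pow_bound:
  fixes A :: "real^'n^'n"
  shows "norm ((((*v) A) ^^ k) x) \<le> (\<Sum>b\<in>Basis. norm ((((*v) A) ^^ k) b)) * norm x"
proof -
  let ?f = "((*v) A) ^^ k"
  have "?f x = ?f (\<Sum>b\<in>Basis. (x \<bullet> b) *\<^sub>R b)" by (simp add: euclidean_representation)
  also have "\<dots> = (\<Sum>b\<in>Basis. (x \<bullet> b) *\<^sub>R ?f b)"
    using lin_pow[where A=A and k=k] by (simp add: linear_sum linear_scale)
  finally have "norm (?f x) \<le> (\<Sum>b\<in>Basis. norm ((x \<bullet> b) *\<^sub>R ?f b))"
    by (metis norm_sum)
  also have "\<dots> \<le> (\<Sum>b\<in>Basis. norm x * norm (?f b))"
    by (intro sum_mono) (simp add: Basis_le_norm mult_right_mono)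
  finally show ?thesis by (simp add: sum_distrib_left mult.commute)
qed

lemma pow_lim:
  fixes A :: "real^'n^'n"
  assumes "asympt_stable A"
  shows "(\<lambda>k. \<Sum>b\<in>Basis. norm ((((*v) A) ^^ k) b)) \<longlonglongrightarrow> 0"
proof -
  have "(\<lambda>k. \<Sum>b\<in>Basis. norm ((((*v) A) ^^ k) b)) \<longlonglongrightarrow> (\<Sum>b\<in>(Basis::(real^'n) set). 0)"
    apply (rule tendsto_sum)
    using assms unfolding asympt_stable_def by (metis tendsto_norm_zero)
  then show ?thesis by simp
qed

lemma traj_shift:
  fixes A :: "real^'n^'n"
  assumes "traj A B U d0 x u d"
  shows "x (k + int j) = (((*v) A) ^^ j) (x k) + (\<Sum>i<j. u (k + int j - 1 - int i) *\<^sub>R ((((*v) A) ^^ i) B))"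
proof (induction j)
  case 0 then show ?case by simp
next
  case (Suc j)
  have rec: "x (k + int j + 1) = A *v x (k + int j) + u (k + int j) *\<^sub>R B"
    using assms unfolding traj_def by blast
  have "A *v (\<Sum>i<j. u (k + int j - 1 - int i) *\<^sub>R ((((*v) A) ^^ i) B))
      = (\<Sum>i<j. u (k + int j - 1 - int i) *\<^sub>R (A *v (((*v) A) ^^ i) B))"
    using matrix_vector_mul_linear[of A] by (simp add: linear_sum linear_scale)
  then have "x (k + int (Suc j)) = (((*v) A) ^^ Suc j) (x k) + u (k + int j) *\<^sub>R B
      + (\<Sum>i<j. u (k + int j - 1 - int i) *\<^sub>R ((((*v) A) ^^ Suc i) B))"
    using rec Suc by (simp add: matrix_vector_right_distrib algebra_simps)
  also have "\<dots> = (((*v) A) ^^ Suc j) (x k) + (\<Sum>i<Suc j. u (k + int (Suc j) - 1 - int i) *\<^sub>R ((((*v) A) ^^ i) B))"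
    by (subst sum.lessThan_Suc_shift) (simp add: algebra_simps)
  finally show ?case .
qed

lemma state_bound:
  fixes A :: "real^'n^'n"
  assumes st: "asympt_stable A" and Uc: "compact U"
  shows "\<exists>Xb\<ge>0. \<forall>x u d. traj A B U d0 x u d \<longrightarrow> (\<forall>k. norm (x k) \<le> Xb)"
proof -
  let ?g = "\<lambda>k. \<Sum>b\<in>Basis. norm ((((*v) A) ^^ k) (b::real^'n))"
  have "eventually (\<lambda>k. ?g k < 1/2) sequentially"
    using pow_lim[OF st] by (rule order_tendstoD) simp
  then obtain K where K: "?g K < 1/2" by (meson eventually_sequentially order_refl)
  obtain Ub where Ub: "\<forall>v\<in>U. \<bar>v\<bar> \<le> Ub"
    using compact_imp_bounded[OF Uc] by (auto simp: bounded_iff)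
  define W where "W = (\<Sum>i<K. \<bar>Ub\<bar> * norm ((((*v) A) ^^ i) B))"
  have W0: "W \<ge> 0" unfolding W_def by (intro sum_nonneg) simp
  have main: "norm (x k) \<le> 2 * W" if tr: "traj A B U d0 x u d" for x u d k
  proof -
    from tr have "bounded (range x)" and uU: "\<forall>k. u k \<in> U" unfolding traj_def by auto
    then obtain S where S: "\<forall>k. norm (x k) \<le> S" by (auto simp: bounded_iff)
    define s where "s = (SUP k. norm (x k))"
    have bdd: "bdd_above (range (\<lambda>k. norm (x k)))" using S by (auto intro: bdd_aboveI)
    have step: "norm (x j) \<le> s / 2 + W" for j
    proof -
      have e: "x j = (((*v) A) ^^ K) (x (j - int K)) + (\<Sum>i<K. u (j - int K + int K - 1 - int i) *\<^sub>R ((((*v) A) ^^ i) B))"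
        using traj_shift[OF tr, of "j - int K" K] by simp
      have n1: "norm ((((*v) A) ^^ K) (x (j - int K))) \<le> s / 2"
      proof -
        have "norm ((((*v) A) ^^ K) (x (j - int K))) \<le> ?g K * norm (x (j - int K))"
          by (rule pow_bound)
        also have "\<dots> \<le> 1/2 * s"
          apply (rule mult_mono)
          using K apply simp
          unfolding s_def apply (rule cSUP_upper[OF _ bdd]) apply simp
          apply simp apply simp done
        finally show ?thesis by simp
      qed
      have n2: "norm (\<Sum>i<K. u (j - int K + int K - 1 - int i) *\<^sub>R ((((*v) A) ^^ i) B)) \<le> W"
        unfolding W_def
        apply (rule order_trans[OF norm_sum])
        apply (rule sum_mono)
        using Ub uU by (auto intro!: mult_right_mono order_trans[OF _ abs_ge_self])
      show ?thesis using e n1 n2 norm_triangle_ineq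
        by (smt (verit))
    qed
    have "s \<le> s / 2 + W" unfolding s_def by (rule cSUP_least) (use step s_def in auto)
    then have "s \<le> 2 * W" by simp
    moreover have "norm (x k) \<le> s" unfolding s_def by (rule cSUP_upper[OF _ bdd]) simp
    ultimately show ?thesis by simp
  qed
  show ?thesis using W0 main by (intro exI[of _ "2*W"]) auto
qed

lemma V_elim:
  assumes "(\<phi>, y) \<in> V_set A B C U d0 m p"
  shows "\<phi> \<in> Phi_set A B C U d0 m p \<and> (\<exists>x u d k. traj A B U d0 x u d \<and>
     \<phi> = Zvec m (\<lambda>j. C \<bullet> x j + d j) k @ Uvec p m u k \<and> y = C \<bullet> x (k + int p) + d (k + int p))"
  using assms unfolding V_set_def Y_set_def by auto

lemma len_ZU: "length (Zvec m z k @ Uvec p m u k) = m + (p + m - 1)"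
  by (simp add: Zvec_def Uvec_def)

lemma nth_ZU: "j < m + (p + m - 1) \<Longrightarrow> (Zvec m z k @ Uvec p m u k) ! j =
   (if j < m then z (k - int j) else u (k + int p - 1 - int (j - m)))"
  by (auto simp: Zvec_def Uvec_def nth_append)

lemma V_bound:
  fixes A :: "real^'n^'n"
  assumes Xb: "\<forall>x u d. traj A B U d0 x u d \<longrightarrow> (\<forall>k. norm (x k) \<le> Xb)"
    and Ub: "\<forall>v\<in>U. \<bar>v\<bar> \<le> Ub"
    and V: "(\<phi>, y) \<in> V_set A B C U d0 m p"
  shows "length \<phi> = m + (p + m - 1) \<and> \<bar>y\<bar> \<le> norm C * Xb + d0 + Ub
     \<and> (\<forall>j<length \<phi>. \<bar>\<phi> ! j\<bar> \<le> norm C * Xb + d0 + Ub)"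
proof -
  obtain x u d k where tr: "traj A B U d0 x u d" and ph: "\<phi> = Zvec m (\<lambda>j. C \<bullet> x j + d j) k @ Uvec p m u k"
    and yy: "y = C \<bullet> x (k + int p) + d (k + int p)" using V_elim[OF V] by blast
  have xb: "norm (x j) \<le> Xb" for j using Xb tr by blast
  have db: "\<bar>d j\<bar> \<le> d0" and uU: "u j \<in> U" for j using tr unfolding traj_def by auto
  have Ub0: "\<bar>u j\<bar> \<le> Ub" for j using Ub uU by blast
  have C0: "norm C * Xb \<ge> 0" using xb[of 0] by (metis mult_nonneg_nonneg norm_ge_zero order_trans)
  have zb: "\<bar>C \<bullet> x j + d j\<bar> \<le> norm C * Xb + d0 + Ub" for j
  proof -
    have "\<bar>C \<bullet> x j\<bar> \<le> norm C * norm (x j)" by (rule Cauchy_Schwarz_ineq2)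
    also have "\<dots> \<le> norm C * Xb" by (simp add: xb mult_left_mono)
    finally show ?thesis using db[of j] Ub0[of 0] by (smt (verit))
  qed
  have "\<bar>u j\<bar> \<le> norm C * Xb + d0 + Ub" for j
    using Ub0[of j] C0 db[of 0] by (smt (verit))
  then have "\<forall>j<length \<phi>. \<bar>\<phi> ! j\<bar> \<le> norm C * Xb + d0 + Ub"
    using zb unfolding ph len_ZU by (auto simp: nth_ZU)
  then show ?thesis using zb len_ZU unfolding yy ph by metis
qed

lemma sum_split_add: "(\<Sum>i<a + (b::nat). f i) = (\<Sum>i<a. f i) + (\<Sum>i<b. f (a + i))"
  by (induction b) (auto simp: add.assoc)

lemma ip_append: "length a = length c \<Longrightarrow> ip (a @ b) (c @ e) = ip a c + ip b e"
  unfolding ip_def by (simp add: sum_split_add nth_append)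

lemma ip_bound:
  assumes "\<forall>j<length \<phi>. \<bar>\<phi> ! j\<bar> \<le> M"
  shows "\<bar>ip \<phi> \<theta>\<bar> \<le> M * (\<Sum>j<length \<phi>. \<bar>\<theta> ! j\<bar>)"
proof -
  have "\<bar>ip \<phi> \<theta>\<bar> \<le> (\<Sum>j<length \<phi>. \<bar>\<phi> ! j * \<theta> ! j\<bar>)" unfolding ip_def by (rule sum_abs)
  also have "\<dots> \<le> (\<Sum>j<length \<phi>. M * \<bar>\<theta> ! j\<bar>)"
    using assms by (intro sum_mono) (simp add: abs_mult mult_right_mono)
  finally show ?thesis by (simp add: sum_distrib_left)
qed

lemma cost_bdd:
  fixes A :: "real^'n^'n"
  assumes Xb: "\<forall>x u d. traj A B U d0 x u d \<longrightarrow> (\<forall>k. norm (x k) \<le> Xb)"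
    and Ub: "\<forall>v\<in>U. \<bar>v\<bar> \<le> Ub"
  shows "bdd_above ((\<lambda>v. \<bar>snd v - ip (fst v) \<theta>\<bar> - dbar) ` V_set A B C U d0 m p)"
proof -
  let ?M = "norm C * Xb + d0 + Ub"
  let ?L = "m + (p + m - 1)"
  have "\<bar>snd v - ip (fst v) \<theta>\<bar> - dbar \<le> ?M + ?M * (\<Sum>j<?L. \<bar>\<theta> ! j\<bar>) + \<bar>dbar\<bar>"
    if v: "v \<in> V_set A B C U d0 m p" for v
  proof -
    obtain \<phi> y where vv: "v = (\<phi>, y)" by force
    from V_bound[OF Xb Ub v[unfolded vv]] have b: "length \<phi> = ?L" "\<bar>y\<bar> \<le> ?M"
      "\<forall>j<length \<phi>. \<bar>\<phi> ! j\<bar> \<le> ?M" by auto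
    have "\<bar>ip \<phi> \<theta>\<bar> \<le> ?M * (\<Sum>j<?L. \<bar>\<theta> ! j\<bar>)" using ip_bound[OF b(3)] b(1) by simp
    then show ?thesis using b unfolding vv by auto
  qed
  then show ?thesis by (intro bdd_aboveI) blast
qed

lemma cost_upper_pt:
  fixes A :: "real^'n^'n"
  assumes Xb: "\<forall>x u d. traj A B U d0 x u d \<longrightarrow> (\<forall>k. norm (x k) \<le> Xb)"
    and Ub: "\<forall>v\<in>U. \<bar>v\<bar> \<le> Ub"
    and v: "v \<in> V_set A B C U d0 m p"
  shows "\<bar>snd v - ip (fst v) \<theta>\<bar> - dbar \<le> cost (V_set A B C U d0 m p) dbar \<theta>"
  unfolding cost_def by (rule cSUP_upper[OF v cost_bdd[OF Xb Ub]])

lemma cost_lower: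
  fixes A :: "real^'n^'n"
  assumes Xb: "\<forall>x u d. traj A B U d0 x u d \<longrightarrow> (\<forall>k. norm (x k) \<le> Xb)"
    and Ub: "\<forall>v\<in>U. \<bar>v\<bar> \<le> Ub"
    and ne: "v0 \<in> V_set A B C U d0 m p" and p1: "p \<ge> 1" and d00: "0 \<le> d0"
  shows "d0 - dbar \<le> cost (V_set A B C U d0 m p) dbar \<theta>"
proof -
  obtain \<phi> y where vv: "v0 = (\<phi>, y)" by force
  from V_elim[OF ne[unfolded vv]] obtain x u d k where phi: "\<phi> \<in> Phi_set A B C U d0 m p"
    and tr: "traj A B U d0 x u d" and ph: "\<phi> = Zvec m (\<lambda>j. C \<bullet> x j + d j) k @ Uvec p m u k"
    by blast
  define t where "t = C \<bullet> x (k + int p) - ip \<phi> \<theta>"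
  define d' where "d' = d(k + int p := (if t \<ge> 0 then d0 else - d0))"
  have tr': "traj A B U d0 x u d'" using tr d00 unfolding traj_def d'_def by auto
  have "Zvec m (\<lambda>j. C \<bullet> x j + d' j) k = Zvec m (\<lambda>j. C \<bullet> x j + d j) k"
    unfolding Zvec_def d'_def using p1 by auto
  then have "C \<bullet> x (k + int p) + d' (k + int p) \<in> Y_set A B C U d0 m p \<phi>"
    unfolding Y_set_def ph using tr' by blast
  then have "(\<phi>, C \<bullet> x (k + int p) + d' (k + int p)) \<in> V_set A B C U d0 m p"
    using phi unfolding V_set_def by blast
  from cost_upper_pt[OF Xb Ub this, of \<theta> dbar]
  have "\<bar>C \<bullet> x (k + int p) + d' (k + int p) - ip \<phi> \<theta>\<bar> - dbar \<le> cost (V_set A B C U d0 m p) dbar \<theta>"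
    by simp
  moreover have "\<bar>C \<bullet> x (k + int p) + d' (k + int p) - ip \<phi> \<theta>\<bar> \<ge> d0"
    unfolding d'_def using d00 t_def by auto
  ultimately show ?thesis by simp
qed

definition thS :: "real^'n^'n \<Rightarrow> real^'n \<Rightarrow> real^'n \<Rightarrow> nat \<Rightarrow> nat \<Rightarrow> real list" where
  "thS A B C m p = replicate m 0 @ map (\<lambda>i. C \<bullet> ((((*v) A) ^^ i) B)) [0..<p + m - 1]"

lemma len_thS: "length (thS A B C m p) = 2 * m + p - 1"
  unfolding thS_def by simp

lemma cost_upper:
  fixes A :: "real^'n^'n"
  assumes Xb: "\<forall>x u d. traj A B U d0 x u d \<longrightarrow> (\<forall>k. norm (x k) \<le> Xb)"
    and Ub: "\<forall>v\<in>U. \<bar>v\<bar> \<le> Ub"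
    and ne: "v0 \<in> V_set A B C U d0 m p" and m1: "m \<ge> 1"
  shows "cost (V_set A B C U d0 m p) dbar (thS A B C m p) \<le>
     d0 - dbar + norm C * ((\<Sum>b\<in>Basis. norm ((((*v) A) ^^ (p + m - 1)) b)) * Xb)"
  unfolding cost_def
proof (rule cSUP_least)
  show "V_set A B C U d0 m p \<noteq> {}" using ne by blast
next
  fix v assume v: "v \<in> V_set A B C U d0 m p"
  obtain \<phi> y where vv: "v = (\<phi>, y)" by force
  from V_elim[OF v[unfolded vv]] obtain x u d k where
    tr: "traj A B U d0 x u d" and ph: "\<phi> = Zvec m (\<lambda>j. C \<bullet> x j + d j) k @ Uvec p m u k"
    and yy: "y = C \<bullet> x (k + int p) + d (k + int p)"
    by blast
  let ?F = "(*v) A"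
  let ?q = "p + m - 1"
  define k' where "k' = k - int (m - 1)"
  have kk: "k' + int ?q = k + int p" unfolding k'_def using m1 by auto
  have xs: "x (k + int p) = (?F ^^ ?q) (x k') + (\<Sum>i<?q. u (k + int p - 1 - int i) *\<^sub>R ((?F ^^ i) B))"
    using traj_shift[OF tr, of k' ?q] unfolding kk by simp
  have ipz: "ip (Zvec m (\<lambda>j. C \<bullet> x j + d j) k) (replicate m 0) = 0"
    unfolding ip_def by (simp add: Zvec_def)
  have ipu: "ip (Uvec p m u k) (map (\<lambda>i. C \<bullet> ((?F ^^ i) B)) [0..<?q]) =
      C \<bullet> (\<Sum>i<?q. u (k + int p - 1 - int i) *\<^sub>R ((?F ^^ i) B))"
    unfolding ip_def Uvec_def by (simp add: inner_sum_right)
  have "ip \<phi> (thS A B C m p) = C \<bullet> (\<Sum>i<?q. u (k + int p - 1 - int i) *\<^sub>R ((?F ^^ i) B))"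
  proof -
    have len: "length (Zvec m (\<lambda>j. C \<bullet> x j + d j) k) = length (replicate m (0::real))"
      by (simp add: Zvec_def)
    show ?thesis unfolding ph thS_def ip_append[OF len] ipz ipu by simp
  qed
  then have e: "y - ip \<phi> (thS A B C m p) = C \<bullet> (?F ^^ ?q) (x k') + d (k + int p)"
    unfolding yy xs by (simp add: inner_add_right)
  have "\<bar>C \<bullet> (?F ^^ ?q) (x k')\<bar> \<le> norm C * norm ((?F ^^ ?q) (x k'))" by (rule Cauchy_Schwarz_ineq2)
  also have "\<dots> \<le> norm C * ((\<Sum>b\<in>Basis. norm ((?F ^^ ?q) b)) * Xb)"
    apply (rule mult_left_mono[OF order_trans[OF pow_bound]])
    using Xb tr by (auto intro!: mult_left_mono sum_nonneg)
  finally have "\<bar>C \<bullet> (?F ^^ ?q) (x k')\<bar> \<le> norm C * ((\<Sum>b\<in>Basis. norm ((?F ^^ ?q) b)) * Xb)" .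
  moreover have "\<bar>d (k + int p)\<bar> \<le> d0" using tr unfolding traj_def by auto
  ultimately show "\<bar>snd v - ip (fst v) (thS A B C m p)\<bar> - dbar \<le>
     d0 - dbar + norm C * ((\<Sum>b\<in>Basis. norm ((?F ^^ ?q) b)) * Xb)"
    unfolding vv using e by simp
qed

definition ipf :: "real list \<Rightarrow> (nat \<Rightarrow> real) \<Rightarrow> real" where
  "ipf \<phi> g = (\<Sum>j<length \<phi>. \<phi> ! j * g j)"

definition Ssum :: "(nat \<Rightarrow> real list) \<Rightarrow> nat \<Rightarrow> (nat \<Rightarrow> real) \<Rightarrow> real" where
  "Ssum ph N g = (\<Sum>i<N. \<bar>ipf (ph i) g\<bar>)"

definition suppin :: "nat set \<Rightarrow> (nat \<Rightarrow> real) \<Rightarrow> bool" where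
  "suppin J g \<longleftrightarrow> (\<forall>x. x \<notin> J \<longrightarrow> g x = 0)"

lemma ipf_add: "ipf \<phi> (\<lambda>x. g x + h x) = ipf \<phi> g + ipf \<phi> h"
  unfolding ipf_def by (simp add: distrib_left sum.distrib)

lemma ipf_diff: "ipf \<phi> (\<lambda>x. g x - h x) = ipf \<phi> g - ipf \<phi> h"
  unfolding ipf_def by (simp add: right_diff_distrib sum_subtractf)

lemma ipf_scale: "ipf \<phi> (\<lambda>x. c * g x) = c * ipf \<phi> g"
  unfolding ipf_def by (simp add: sum_distrib_left algebra_simps)

lemma ipf_zero: "ipf \<phi> (\<lambda>x. 0) = 0"
  unfolding ipf_def by simp

lemma Ssum_nonneg: "Ssum ph N g \<ge> 0"
  unfolding Ssum_def by (simp add: sum_nonneg)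

lemma Ssum_mono: "N \<le> N' \<Longrightarrow> Ssum ph N g \<le> Ssum ph N' g"
  unfolding Ssum_def by (rule sum_mono2) auto

lemma Ssum_cong: "(\<And>i. ipf (ph i) g = ipf (ph i) h) \<Longrightarrow> Ssum ph N g = Ssum ph N h"
  unfolding Ssum_def by simp

lemma Ssum_scale: "Ssum ph N (\<lambda>x. c * g x) = \<bar>c\<bar> * Ssum ph N g"
  unfolding Ssum_def by (simp add: ipf_scale abs_mult sum_distrib_left)

lemma Ssum_elem: "i < N \<Longrightarrow> \<bar>ipf (ph i) g\<bar> \<le> Ssum ph N g"
  unfolding Ssum_def by (rule member_le_sum) auto

lemma Ssum_diff_le: "Ssum ph N (\<lambda>x. g x - h x) \<le> Ssum ph N g + Ssum ph N h"
  unfolding Ssum_def ipf_diff by (simp add: sum.distrib[symmetric] sum_mono abs_triangle_ineq4)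

lemma finite_subseq:
  fixes w :: "nat \<Rightarrow> nat \<Rightarrow> real"
  assumes "finite J" "\<forall>k x. \<bar>w k x\<bar> \<le> Bd" "\<forall>k. suppin J (w k)"
  shows "\<exists>r u. strict_mono r \<and> (\<forall>x. (\<lambda>k. w (r k) x) \<longlonglongrightarrow> u x) \<and> suppin J u"
  using assms
proof (induction J arbitrary: w rule: finite_induct)
  case empty
  then have "w k x = 0" for k x unfolding suppin_def by auto
  then show ?case by (intro exI[of _ id] exI[of _ "\<lambda>x. 0"]) (auto simp: strict_mono_def suppin_def)
next
  case (insert a J)
  define w' where "w' k = (w k)(a := 0)" for k
  have "\<forall>k x. \<bar>w' k x\<bar> \<le> Bd" using insert.prems(1) unfolding w'_def by (metis abs_zero abs_ge_zero fun_upd_apply order_trans)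
  moreover have "\<forall>k. suppin J (w' k)" using insert.prems(2) unfolding w'_def suppin_def by auto
  ultimately obtain r1 u1 where r1: "strict_mono r1" and c1: "\<forall>x. (\<lambda>k. w' (r1 k) x) \<longlonglongrightarrow> u1 x"
    and s1: "suppin J u1" using insert.IH by blast
  have "bounded (range (\<lambda>k. w (r1 k) a))"
    using insert.prems(1) by (auto simp: bounded_iff)
  then obtain l r2 where r2: "strict_mono r2" and c2: "((\<lambda>k. w (r1 k) a) \<circ> r2) \<longlonglongrightarrow> l"
    using bounded_imp_convergent_subsequence by blast
  show ?case
  proof (intro exI[of _ "r1 \<circ> r2"] exI[of _ "u1(a := l)"] conjI allI)
    show "strict_mono (r1 \<circ> r2)" using r1 r2 by (rule strict_mono_o)
    fix x
    show "(\<lambda>k. w ((r1 \<circ> r2) k) x) \<longlonglongrightarrow> (u1(a := l)) x"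
    proof (cases "x = a")
      case True then show ?thesis using c2 by (simp add: o_def)
    next
      case False
      have "((\<lambda>k. w' (r1 k) x) \<circ> r2) \<longlonglongrightarrow> u1 x" by (rule LIMSEQ_subseq_LIMSEQ[OF c1[rule_format] r2])
      then show ?thesis using False by (simp add: o_def w'_def)
    qed
  next
    show "suppin (insert a J) (u1(a := l))" using s1 unfolding suppin_def by auto
  qed
qed

lemma ipf_tendsto:
  assumes "\<forall>x. (\<lambda>k. w k x) \<longlonglongrightarrow> u x"
  shows "(\<lambda>k. ipf \<phi> (w k)) \<longlonglongrightarrow> ipf \<phi> u"
  unfolding ipf_def using assms by (intro tendsto_intros) auto

lemma Qlem:
  fixes ph :: "nat \<Rightarrow> real list"
  assumes "finite J"
  shows "\<exists>N K. K \<ge> 0 \<and> (\<forall>g. suppin J g \<longrightarrow> (\<exists>g'. suppin J g' \<and>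
     (\<forall>i. ipf (ph i) g' = ipf (ph i) g) \<and> (\<forall>x. \<bar>g' x\<bar> \<le> K * Ssum ph N g)))"
  using assms
proof (induction J rule: finite_induct)
  case empty
  show ?case
  proof (intro exI[of _ "0::nat"] exI[of _ "0::real"] conjI allI impI)
    fix g assume "suppin {} g"
    then have "g = (\<lambda>x. 0)" unfolding suppin_def by auto
    then show "\<exists>g'. suppin {} g' \<and> (\<forall>i. ipf (ph i) g' = ipf (ph i) g) \<and> (\<forall>x. \<bar>g' x\<bar> \<le> 0 * Ssum ph 0 g)"
      by (intro exI[of _ "\<lambda>x. 0"]) (simp add: suppin_def)
  qed simp
next
  case (insert j J)
  from insert.IH obtain N1 K1 where K1: "K1 \<ge> 0" and IH: "\<forall>g. suppin J g \<longrightarrow> (\<exists>g'. suppin J g' \<and>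
     (\<forall>i. ipf (ph i) g' = ipf (ph i) g) \<and> (\<forall>x. \<bar>g' x\<bar> \<le> K1 * Ssum ph N1 g))" by blast
  then have "\<forall>g. \<exists>g'. suppin J g \<longrightarrow> suppin J g' \<and>
     (\<forall>i. ipf (ph i) g' = ipf (ph i) g) \<and> (\<forall>x. \<bar>g' x\<bar> \<le> K1 * Ssum ph N1 g)" by blast
  then obtain G where G: "\<And>g. suppin J g \<Longrightarrow> suppin J (G g) \<and>
     (\<forall>i. ipf (ph i) (G g) = ipf (ph i) g) \<and> (\<forall>x. \<bar>G g x\<bar> \<le> K1 * Ssum ph N1 g)"
    by (metis choice)
  define \<delta> where "\<delta> = (\<lambda>x. if x = j then 1 else (0::real))"
  have sub: "suppin J g \<Longrightarrow> suppin (insert j J) g" for g unfolding suppin_def by auto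
  show ?case
  proof (cases "\<exists>u. suppin J u \<and> (\<forall>i. ipf (ph i) \<delta> = ipf (ph i) u)")
    case True
    then obtain u where su: "suppin J u" and eu: "\<forall>i. ipf (ph i) \<delta> = ipf (ph i) u" by blast
    show ?thesis
    proof (intro exI[of _ N1] exI[of _ K1] conjI allI impI)
      fix g assume sg: "suppin (insert j J) g"
      define g1 where "g1 = (\<lambda>x. if x = j then 0 else g x)"
      define h where "h = (\<lambda>x. g1 x + g j * u x)"
      have sh: "suppin J h" using sg su insert.hyps(2) unfolding h_def g1_def suppin_def by auto
      have gsplit: "g = (\<lambda>x. g1 x + g j * \<delta> x)" unfolding g1_def \<delta>_def by auto
      have eh: "ipf (ph i) h = ipf (ph i) g" for i
        apply (subst gsplit) unfolding h_def ipf_add ipf_scale using eu by simp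
      from G[OF sh] have "suppin J (G h)" "\<forall>i. ipf (ph i) (G h) = ipf (ph i) g"
        "\<forall>x. \<bar>G h x\<bar> \<le> K1 * Ssum ph N1 g" using eh Ssum_cong[of ph h g, OF eh] by auto
      then show "\<exists>g'. suppin (insert j J) g' \<and> (\<forall>i. ipf (ph i) g' = ipf (ph i) g) \<and>
          (\<forall>x. \<bar>g' x\<bar> \<le> K1 * Ssum ph N1 g)" using sub by blast
    qed (rule K1)
  next
    case False
    have "\<exists>N2 c. c > 0 \<and> (\<forall>u. suppin J u \<longrightarrow> c \<le> Ssum ph N2 (\<lambda>x. \<delta> x - u x))"
    proof (rule ccontr)
      assume neg: "\<not> ?thesis"
      have "\<forall>k. \<exists>u. suppin J u \<and> Ssum ph (k + N1) (\<lambda>x. \<delta> x - u x) < inverse (real (Suc k))"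
      proof
        fix k
        have "inverse (real (Suc k)) > 0" by simp
        then show "\<exists>u. suppin J u \<and> Ssum ph (k + N1) (\<lambda>x. \<delta> x - u x) < inverse (real (Suc k))"
          using neg by (meson not_le)
      qed
      then obtain Uf where Uf: "\<And>k. suppin J (Uf k) \<and> Ssum ph (k + N1) (\<lambda>x. \<delta> x - Uf k x) < inverse (real (Suc k))"
        by metis
      define w where "w k = G (Uf k)" for k
      have wG: "suppin J (w k) \<and> (\<forall>i. ipf (ph i) (w k) = ipf (ph i) (Uf k)) \<and> (\<forall>x. \<bar>w k x\<bar> \<le> K1 * Ssum ph N1 (Uf k))" for k
        unfolding w_def using G Uf by blast
      have bnd: "\<bar>w k x\<bar> \<le> K1 * (Ssum ph N1 \<delta> + 1)" for k x
      proof -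
        have e: "Uf k = (\<lambda>x. \<delta> x - (\<delta> x - Uf k x))" by auto
        have "Ssum ph N1 (Uf k) \<le> Ssum ph N1 \<delta> + Ssum ph N1 (\<lambda>x. \<delta> x - Uf k x)"
          by (subst e) (rule Ssum_diff_le)
        also have "Ssum ph N1 (\<lambda>x. \<delta> x - Uf k x) \<le> Ssum ph (k + N1) (\<lambda>x. \<delta> x - Uf k x)"
          by (rule Ssum_mono) simp
        also have "\<dots> \<le> 1" using Uf[of k]
          by (smt (verit, del_insts) inverse_le_1_iff of_nat_0_le_iff of_nat_Suc)
        finally have "Ssum ph N1 (Uf k) \<le> Ssum ph N1 \<delta> + 1" by simp
        then show ?thesis using wG[of k] K1 by (meson mult_left_mono order_trans)
      qed
      obtain r u0 where r: "strict_mono r" and cv: "\<forall>x. (\<lambda>k. w (r k) x) \<longlonglongrightarrow> u0 x" and su0: "suppin J u0"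
        using finite_subseq[OF insert.hyps(1), of w] bnd wG by blast
      have "ipf (ph i) \<delta> = ipf (ph i) u0" for i
      proof -
        have l1: "(\<lambda>k. ipf (ph i) (Uf (r k))) \<longlonglongrightarrow> ipf (ph i) u0"
          using ipf_tendsto[OF cv, of "ph i"] wG by simp
        have "(\<lambda>k. ipf (ph i) \<delta> - ipf (ph i) (Uf (r k))) \<longlonglongrightarrow> 0"
        proof (rule Lim_null_comparison)
          show "((\<lambda>n. inverse (real (Suc n))) \<circ> r) \<longlonglongrightarrow> 0"
            by (rule LIMSEQ_subseq_LIMSEQ[OF LIMSEQ_inverse_real_of_nat r])
          show "\<forall>\<^sub>F k in sequentially. norm (ipf (ph i) \<delta> - ipf (ph i) (Uf (r k))) \<le> ((\<lambda>n. inverse (real (Suc n))) \<circ> r) k"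
            unfolding eventually_sequentially
          proof (intro exI[of _ "Suc i"] allI impI)
            fix k assume ik: "Suc i \<le> k"
            have "k \<le> r k" using r by (rule seq_suble)
            then have ir: "i < r k + N1" using ik by simp
            have "norm (ipf (ph i) \<delta> - ipf (ph i) (Uf (r k))) = \<bar>ipf (ph i) (\<lambda>x. \<delta> x - Uf (r k) x)\<bar>"
              by (simp add: ipf_diff)
            also have "\<dots> \<le> Ssum ph (r k + N1) (\<lambda>x. \<delta> x - Uf (r k) x)"
              using ir by (rule Ssum_elem)
            also have "\<dots> \<le> ((\<lambda>n. inverse (real (Suc n))) \<circ> r) k"
              using Uf[of "r k"] by simp
            finally show "norm (ipf (ph i) \<delta> - ipf (ph i) (Uf (r k))) \<le> ((\<lambda>n. inverse (real (Suc n))) \<circ> r) k" .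
          qed
        qed
        then have "(\<lambda>k. ipf (ph i) \<delta> - (ipf (ph i) \<delta> - ipf (ph i) (Uf (r k)))) \<longlonglongrightarrow> ipf (ph i) \<delta> - 0"
          by (intro tendsto_diff tendsto_const)
        then have "(\<lambda>k. ipf (ph i) (Uf (r k))) \<longlonglongrightarrow> ipf (ph i) \<delta>" by simp
        then show ?thesis using l1 by (rule LIMSEQ_unique)
      qed
      then show False using False su0 by blast
    qed
    then obtain N2 c where c0: "c > 0" and cb': "\<forall>u. suppin J u \<longrightarrow> c \<le> Ssum ph N2 (\<lambda>x. \<delta> x - u x)"
      by blast
    have cb: "c \<le> Ssum ph N2 (\<lambda>x. \<delta> x - u x)" if "suppin J u" for u using cb' that by simp
    define D where "D = Ssum ph N1 \<delta>"
    have D0: "D \<ge> 0" unfolding D_def by (rule Ssum_nonneg)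
    show ?thesis
    proof (intro exI[of _ "max N1 N2"] exI[of _ "1 / c + K1 + K1 * D / c"] conjI allI impI)
      show "1 / c + K1 + K1 * D / c \<ge> 0" using c0 K1 D0 by simp
      fix g assume sg: "suppin (insert j J) g"
      define t where "t = g j"
      define g1 where "g1 = (\<lambda>x. if x = j then 0 else g x)"
      have sg1: "suppin J g1" using sg unfolding g1_def suppin_def by auto
      have gsplit: "g = (\<lambda>x. g1 x + t * \<delta> x)" unfolding g1_def \<delta>_def t_def by auto
      let ?S = "Ssum ph (max N1 N2) g"
      have tb: "\<bar>t\<bar> * c \<le> Ssum ph N2 g"
      proof (cases "t = 0")
        case True then show ?thesis by (simp add: Ssum_nonneg)
      next
        case False
        define u where "u = (\<lambda>x. - g1 x / t)"
        have "suppin J u" using sg1 unfolding u_def suppin_def by auto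
        then have "c \<le> Ssum ph N2 (\<lambda>x. \<delta> x - u x)" by (rule cb)
        moreover have "g = (\<lambda>x. t * (\<delta> x - u x))" using False unfolding gsplit u_def by (auto simp: field_simps)
        then have "Ssum ph N2 g = \<bar>t\<bar> * Ssum ph N2 (\<lambda>x. \<delta> x - u x)"
          using Ssum_scale[of ph N2 t "\<lambda>x. \<delta> x - u x"] by simp
        ultimately show ?thesis by (simp add: mult_left_mono)
      qed
      then have tb2: "\<bar>t\<bar> \<le> ?S / c" using c0 Ssum_mono[of N2 "max N1 N2" ph g]
        by (simp add: field_simps)
      have "Ssum ph N1 g1 \<le> Ssum ph N1 g + Ssum ph N1 (\<lambda>x. t * \<delta> x)"
      proof -
        have e: "g1 = (\<lambda>x. g x - t * \<delta> x)" unfolding gsplit by auto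
        show ?thesis unfolding e by (rule Ssum_diff_le)
      qed
      then have g1b: "Ssum ph N1 g1 \<le> ?S + \<bar>t\<bar> * D"
        unfolding Ssum_scale D_def using Ssum_mono[of N1 "max N1 N2" ph g] by simp
      from G[OF sg1] have G1: "suppin J (G g1)" "\<forall>i. ipf (ph i) (G g1) = ipf (ph i) g1"
        "\<forall>x. \<bar>G g1 x\<bar> \<le> K1 * Ssum ph N1 g1" by auto
      define g' where "g' = (\<lambda>x. G g1 x + t * \<delta> x)"
      show "\<exists>g'. suppin (insert j J) g' \<and> (\<forall>i. ipf (ph i) g' = ipf (ph i) g) \<and>
          (\<forall>x. \<bar>g' x\<bar> \<le> (1 / c + K1 + K1 * D / c) * ?S)"
      proof (intro exI[of _ g'] conjI allI)
        show "suppin (insert j J) g'" using G1(1) unfolding g'_def suppin_def \<delta>_def by auto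
        fix i
        have "ipf (ph i) g = ipf (ph i) g1 + t * ipf (ph i) \<delta>"
          by (subst gsplit) (simp add: ipf_add ipf_scale)
        then show "ipf (ph i) g' = ipf (ph i) g"
          unfolding g'_def ipf_add ipf_scale using G1(2) by simp
      next
        fix x
        have d1: "\<bar>t * \<delta> x\<bar> \<le> \<bar>t\<bar>" unfolding \<delta>_def by auto
        have "\<bar>g' x\<bar> \<le> \<bar>G g1 x\<bar> + \<bar>t\<bar>" unfolding g'_def using d1 by linarith
        also have "\<dots> \<le> K1 * (?S + \<bar>t\<bar> * D) + \<bar>t\<bar>"
          using G1(3) g1b K1 by (smt (verit) mult_left_mono)
        also have "\<dots> \<le> K1 * (?S + ?S / c * D) + ?S / c"
          using tb2 K1 D0 by (smt (verit) mult_left_mono mult_right_mono)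
        also have "\<dots> = (1 / c + K1 + K1 * D / c) * ?S" by (simp add: field_simps)
        finally show "\<bar>g' x\<bar> \<le> (1 / c + K1 + K1 * D / c) * ?S" .
      qed
    qed
  qed
qed

lemma ip_ipf: "length \<theta> = length \<phi> \<Longrightarrow> ip \<phi> \<theta> = ipf \<phi> (\<lambda>j. if j < length \<phi> then \<theta> ! j else 0)"
  unfolding ip_def ipf_def by (intro sum.cong) auto

lemma ip_map: "length \<phi> = L \<Longrightarrow> ip \<phi> (map g [0..<L]) = ipf \<phi> g"
  unfolding ip_def ipf_def by (intro sum.cong) auto

lemma vdist_comp:
  assumes "vdist v w \<le> \<beta>"
  shows "(\<forall>j<length (fst v). \<bar>fst v ! j - fst w ! j\<bar> \<le> \<beta>) \<and> \<bar>snd v - snd w\<bar> \<le> \<beta>"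
proof -
  let ?T = "(\<Sum>i<length (fst v). (fst v ! i - fst w ! i)\<^sup>2) + (snd v - snd w)\<^sup>2"
  have T0: "(\<Sum>i<length (fst v). (fst v ! i - fst w ! i)\<^sup>2) \<ge> 0" by (simp add: sum_nonneg)
  have s: "sqrt ?T \<le> \<beta>" using assms unfolding vdist_def .
  have "\<bar>a\<bar> \<le> \<beta>" if "a\<^sup>2 \<le> ?T" for a
  proof -
    have "\<bar>a\<bar> = sqrt (a\<^sup>2)" by simp
    also have "\<dots> \<le> sqrt ?T" using that by (rule real_sqrt_le_mono)
    finally show ?thesis using s by simp
  qed
  moreover have "(fst v ! j - fst w ! j)\<^sup>2 \<le> ?T" if "j < length (fst v)" for j
  proof -
    have "(fst v ! j - fst w ! j)\<^sup>2 \<le> (\<Sum>i<length (fst v). (fst v ! i - fst w ! i)\<^sup>2)"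
      using that by (intro member_le_sum) auto
    then show ?thesis by (smt (verit) zero_le_power2)
  qed
  moreover have "(snd v - snd w)\<^sup>2 \<le> ?T" using T0 by simp
  ultimately show ?thesis by blast
qed

lemma ip_diff_bound:
  assumes "length a = L" "length b = L" "\<forall>j<L. \<bar>a ! j - b ! j\<bar> \<le> \<beta>" "\<forall>j<L. \<bar>\<theta> ! j\<bar> \<le> R"
  shows "\<bar>ip a \<theta> - ip b \<theta>\<bar> \<le> real L * (\<beta> * R)"
proof -
  have "ip a \<theta> - ip b \<theta> = (\<Sum>j<L. (a ! j - b ! j) * \<theta> ! j)"
    unfolding ip_def assms(1,2) by (simp add: sum_subtractf left_diff_distrib)
  also have "\<bar>\<dots>\<bar> \<le> (\<Sum>j<L. \<bar>(a ! j - b ! j) * \<theta> ! j\<bar>)" by (rule sum_abs)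
  also have "\<dots> \<le> (\<Sum>j<L. \<beta> * R)"
    using assms(3,4) by (intro sum_mono) (simp add: abs_mult mult_mono')
  finally show ?thesis by simp
qed

theorem theorem1:
  fixes A :: "real^'n^'n" and B C :: "real^'n"
    and U :: "real set" and d0 dbar :: real and m :: nat
    and \<Omega> :: "nat \<Rightarrow> real list set"
    and data :: "nat \<Rightarrow> nat \<Rightarrow> real list \<times> real"
  assumes stable: "asympt_stable A"
    and obs: "completely_observable A C"
    and reach: "reachable A B"
    and U_compact: "compact U" and U_ne: "U \<noteq> {}"
    and d0_nonneg: "0 \<le> d0"
    and dbar_nonneg: "0 \<le> dbar"
    and order: "m \<ge> CARD('n)"
    and Omega_dim: "\<And>p \<theta>. \<theta> \<in> \<Omega> p \<Longrightarrow> length \<theta> = 2 * m + p - 1"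
    and Omega_compact: "\<And>p. compact (list_emb ` \<Omega> p)"
    and Omega_whole: "\<And>p. p \<ge> 1 \<Longrightarrow>
          (INF \<theta>\<in>\<Omega> p. cost (V_set A B C U d0 m p) dbar \<theta>)
        = (INF \<theta>\<in>{\<theta>. length \<theta> = 2 * m + p - 1}. cost (V_set A B C U d0 m p) dbar \<theta>)"
    and data_in_V: "\<And>p i. p \<ge> 1 \<Longrightarrow> i \<ge> 1 \<Longrightarrow> data p i \<in> V_set A B C U d0 m p"
    and informative: "\<And>p \<beta>. p \<ge> 1 \<Longrightarrow> \<beta> > 0 \<Longrightarrow>
          \<exists>N. \<forall>v\<in>V_set A B C U d0 m p. \<exists>i\<in>{1..N}. vdist (data p i) v \<le> \<beta>"
  shows "((\<lambda>p. lambda_p A B C U d0 dbar m \<Omega> p) \<longlonglongrightarrow> d0 - dbar)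
       \<and> (\<forall>p N. p \<ge> 1 \<longrightarrow> 0 \<le> lambda_p A B C U d0 dbar m \<Omega> p \<longrightarrow>
           lambda_low dbar m data p N \<le> lambda_p A B C U d0 dbar m \<Omega> p)
       \<and> (\<forall>p \<eta>. p \<ge> 1 \<longrightarrow> 0 < \<eta> \<longrightarrow> \<eta> \<le> lambda_p A B C U d0 dbar m \<Omega> p \<longrightarrow>
           (\<exists>N. lambda_low dbar m data p N \<ge> lambda_p A B C U d0 dbar m \<Omega> p - \<eta>))"
proof -
  obtain Xb where Xb0: "Xb \<ge> 0" and Xb: "\<forall>x u d. traj A B U d0 x u d \<longrightarrow> (\<forall>k. norm (x k) \<le> Xb)"
    using state_bound[OF stable U_compact] by blast
  obtain Ub where Ub: "\<forall>v\<in>U. \<bar>v\<bar> \<le> Ub"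
    using compact_imp_bounded[OF U_compact] by (auto simp: bounded_iff)
  have m1: "m \<ge> 1" using order by (metis One_nat_def Suc_leI finite_UNIV_card_ge_0 finite order_trans)
  let ?V = "\<lambda>p. V_set A B C U d0 m p"
  let ?lp = "\<lambda>p. lambda_p A B C U d0 dbar m \<Omega> p"
  let ?g = "\<lambda>k. \<Sum>b\<in>Basis. norm ((((*v) A) ^^ k) (b::real^'n))"
  let ?M = "norm C * Xb + d0 + Ub"
  have ne: "data p 1 \<in> ?V p" if "p \<ge> 1" for p using data_in_V that by simp
  have lp_eq: "?lp p = (INF \<theta>\<in>{\<theta>. length \<theta> = 2 * m + p - 1}. cost (?V p) dbar \<theta>)" if "p \<ge> 1" for p
    unfolding lambda_p_def using Omega_whole that by simp
  have clow: "d0 - dbar \<le> cost (?V p) dbar \<theta>" if "p \<ge> 1" for p \<theta>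
    using cost_lower[OF Xb Ub ne[OF that] that d0_nonneg] .
  have bddb: "bdd_below (cost (?V p) dbar ` {\<theta>. length \<theta> = 2 * m + p - 1})" if "p \<ge> 1" for p
    using clow[OF that] by (intro bdd_belowI) blast
  have lp_le: "?lp p \<le> cost (?V p) dbar \<theta>" if "p \<ge> 1" "length \<theta> = 2 * m + p - 1" for p \<theta>
    unfolding lp_eq[OF that(1)] by (rule cINF_lower[OF bddb[OF that(1)]]) (use that in simp)
  have lp_low: "d0 - dbar \<le> ?lp p" if "p \<ge> 1" for p
    unfolding lp_eq[OF that] 
  proof (rule cINF_greatest)
    show "{\<theta>. length \<theta> = 2 * m + p - 1} \<noteq> {}" by (metis (mono_tags) empty_iff length_replicate mem_Collect_eq)
  qed (rule clow[OF that])
  have lp_up: "?lp p \<le> d0 - dbar + norm C * (?g (p + m - 1) * Xb)" if "p \<ge> 1" for p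
    using lp_le[OF that len_thS[of A B C m p]] cost_upper[OF Xb Ub ne[OF that] m1, of dbar] by simp
  have part1: "?lp \<longlonglongrightarrow> d0 - dbar"
  proof (rule real_tendsto_sandwich)
    show "\<forall>\<^sub>F p in sequentially. d0 - dbar \<le> ?lp p"
      using lp_low by (auto simp: eventually_sequentially)
    show "\<forall>\<^sub>F p in sequentially. ?lp p \<le> d0 - dbar + norm C * (?g (p + (m - 1)) * Xb)"
      using lp_up m1 by (auto simp: eventually_sequentially)
    show "(\<lambda>p. d0 - dbar) \<longlonglongrightarrow> d0 - dbar" by simp
    have "(\<lambda>p. ?g (p + (m - 1))) \<longlonglongrightarrow> 0"
      by (rule LIMSEQ_ignore_initial_segment[OF pow_lim[OF stable]])
    then have "(\<lambda>p. d0 - dbar + norm C * (?g (p + (m - 1)) * Xb)) \<longlonglongrightarrow> d0 - dbar + norm C * (0 * Xb)"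
      by (intro tendsto_intros)
    then show "(\<lambda>p. d0 - dbar + norm C * (?g (p + (m - 1)) * Xb)) \<longlonglongrightarrow> d0 - dbar" by simp
  qed
  have part2: "lambda_low dbar m data p N \<le> ?lp p" if p1: "p \<ge> 1" and l0: "0 \<le> ?lp p" for p N
  proof (rule field_le_epsilon)
    fix e :: real assume e0: "0 < e"
    have lt: "Inf (cost (?V p) dbar ` {\<theta>. length \<theta> = 2 * m + p - 1}) < ?lp p + e"
      using lp_eq[OF p1] e0 by simp
    have nE: "cost (?V p) dbar ` {\<theta>. length \<theta> = 2 * m + p - 1} \<noteq> {}"
      by (metis (mono_tags) empty_iff image_is_empty length_replicate mem_Collect_eq)
    obtain c where "c \<in> cost (?V p) dbar ` {\<theta>. length \<theta> = 2 * m + p - 1}" "c < ?lp p + e"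
      using cInf_lessD[OF nE lt] by blast
    then obtain \<theta> where th: "length \<theta> = 2 * m + p - 1" and ct: "cost (?V p) dbar \<theta> < ?lp p + e"
      by auto
    let ?lam = "max 0 (cost (?V p) dbar \<theta>)"
    have mem: "?lam \<in> {lam. lam \<ge> 0 \<and> (\<exists>\<theta>. length \<theta> = 2 * m + p - 1 \<and>
        (\<forall>i\<in>{1..N}. \<bar>snd (data p i) - ip (fst (data p i)) \<theta>\<bar> \<le> lam + dbar))}"
    proof (intro CollectI conjI exI[of _ \<theta>] ballI)
      fix i assume "i \<in> {1..N}"
      then have "data p i \<in> ?V p" using data_in_V p1 by simp
      from cost_upper_pt[OF Xb Ub this, of \<theta> dbar]
      show "\<bar>snd (data p i) - ip (fst (data p i)) \<theta>\<bar> \<le> ?lam + dbar" by simp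
    qed (use th in auto)
    have "lambda_low dbar m data p N \<le> ?lam"
      unfolding lambda_low_def by (rule cInf_lower[OF mem]) (intro bdd_belowI[of _ 0], simp)
    also have "\<dots> \<le> ?lp p + e" using ct l0 e0 by simp
    finally show "lambda_low dbar m data p N \<le> ?lp p + e" .
  qed
  have part3: "\<exists>N. lambda_low dbar m data p N \<ge> ?lp p - \<eta>"
    if p1: "p \<ge> 1" and e0: "0 < \<eta>" and el: "\<eta> \<le> ?lp p" for p \<eta>
  proof -
    let ?L = "2 * m + p - 1"
    let ?lam0 = "?lp p"
    have dV: "data p i \<in> ?V p" if "i \<ge> 1" for i using data_in_V p1 that by simp
    have dlen: "length (fst (data p i)) = ?L" if "i \<ge> 1" for i
      using V_bound[OF Xb Ub, of "fst (data p i)" "snd (data p i)"] dV[OF that] by simp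
    have dy: "\<bar>snd (data p i)\<bar> \<le> ?M" if "i \<ge> 1" for i
      using V_bound[OF Xb Ub, of "fst (data p i)" "snd (data p i)"] dV[OF that] by simp
    have M0: "?M \<ge> 0" using dy[of 1] by simp
    define ph where "ph i = fst (data p (Suc i))" for i
    obtain N0 K where K0: "K \<ge> 0" and QK: "\<forall>g. suppin {..<?L} g \<longrightarrow> (\<exists>g'. suppin {..<?L} g' \<and>
       (\<forall>i. ipf (ph i) g' = ipf (ph i) g) \<and> (\<forall>x. \<bar>g' x\<bar> \<le> K * Ssum ph N0 g))"
      using Qlem[of "{..<?L}" ph] by blast
    define R where "R = K * (real N0 * (?M + ?lam0 + dbar))"
    have R0: "R \<ge> 0" unfolding R_def using K0 M0 e0 el dbar_nonneg by simp
    define \<beta> where "\<beta> = \<eta> / (2 * (1 + real ?L * R))"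
    have LR: "real ?L * R \<ge> 0" using R0 by simp
    have b0: "\<beta> > 0" unfolding \<beta>_def using e0 LR by (intro divide_pos_pos) auto
    have bR: "\<beta> + real ?L * (\<beta> * R) = \<eta> / 2"
    proof -
      have q: "1 + real ?L * R \<noteq> 0" using LR by linarith
      have "\<beta> + real ?L * (\<beta> * R) = \<beta> * (1 + real ?L * R)" by (simp add: algebra_simps)
      also have "\<dots> = \<eta> / 2" unfolding \<beta>_def using q
        by (simp add: field_simps del: distrib_left distrib_right)
      finally show ?thesis .
    qed
    obtain Nb where Nb: "\<forall>v\<in>?V p. \<exists>i\<in>{1..Nb}. vdist (data p i) v \<le> \<beta>"
      using informative[OF p1 b0] by blast
    define N where "N = max N0 Nb"
    let ?Set = "{lam. lam \<ge> 0 \<and> (\<exists>\<theta>. length \<theta> = 2 * m + p - 1 \<and>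
        (\<forall>i\<in>{1..N}. \<bar>snd (data p i) - ip (fst (data p i)) \<theta>\<bar> \<le> lam + dbar))}"
    have "?lp p - \<eta> \<le> Inf ?Set"
    proof (rule cInf_greatest)
      let ?l0 = "\<Sum>i\<in>{1..N}. \<bar>snd (data p i)\<bar>"
      have "?l0 \<in> ?Set"
      proof (intro CollectI conjI exI[of _ "replicate ?L 0"] ballI)
        fix i assume i: "i \<in> {1..N}"
        have "ip (fst (data p i)) (replicate ?L 0) = 0"
          unfolding ip_def using dlen[of i] i by simp
        moreover have "\<bar>snd (data p i)\<bar> \<le> ?l0" using i by (intro member_le_sum) auto
        ultimately show "\<bar>snd (data p i) - ip (fst (data p i)) (replicate ?L 0)\<bar> \<le> ?l0 + dbar"
          using dbar_nonneg by simp
      qed (auto simp: sum_nonneg)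
      then show "?Set \<noteq> {}" by blast
    next
      fix lam assume "lam \<in> ?Set"
      then obtain \<theta> where lam0: "lam \<ge> 0" and th: "length \<theta> = ?L"
        and fe: "\<forall>i\<in>{1..N}. \<bar>snd (data p i) - ip (fst (data p i)) \<theta>\<bar> \<le> lam + dbar" by blast
      show "?lp p - \<eta> \<le> lam"
      proof (rule ccontr)
        assume "\<not> ?lp p - \<eta> \<le> lam"
        then have ll: "lam < ?lp p - \<eta>" by simp
        define g where "g = (\<lambda>j. if j < ?L then \<theta> ! j else 0)"
        have sg: "suppin {..<?L} g" unfolding g_def suppin_def by auto
        obtain g' where sg': "suppin {..<?L} g'" and eq: "\<forall>i. ipf (ph i) g' = ipf (ph i) g"
          and gb: "\<forall>x. \<bar>g' x\<bar> \<le> K * Ssum ph N0 g" using QK sg by blast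
        define \<theta>' where "\<theta>' = map g' [0..<?L]"
        have th': "length \<theta>' = ?L" unfolding \<theta>'_def by simp
        have ipeq: "ip (fst (data p i)) \<theta>' = ip (fst (data p i)) \<theta>" if "i \<ge> 1" for i
        proof -
          have ii: "Suc (i - 1) = i" using that by simp
          have "ip (fst (data p i)) \<theta>' = ipf (ph (i - 1)) g'"
            unfolding \<theta>'_def ph_def ii by (rule ip_map[OF dlen[OF that]])
          also have "\<dots> = ipf (ph (i - 1)) g" using eq by simp
          also have "\<dots> = ip (fst (data p i)) \<theta>"
            unfolding ph_def ii g_def using ip_ipf[of \<theta> "fst (data p i)"] th dlen[OF that] by simp
          finally show ?thesis .
        qed
        have "Ssum ph N0 g \<le> real N0 * (?M + ?lam0 + dbar)"
        proof -
          have "\<bar>ipf (ph i) g\<bar> \<le> ?M + ?lam0 + dbar" if "i \<in> {..<N0}" for i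
          proof -
            have i1: "Suc i \<in> {1..N}" using that unfolding N_def by auto
            have "ipf (ph i) g = ip (fst (data p (Suc i))) \<theta>"
              unfolding ph_def g_def using ip_ipf[of \<theta> "fst (data p (Suc i))"] th dlen[of "Suc i"] by simp
            moreover have "\<bar>snd (data p (Suc i)) - ip (fst (data p (Suc i))) \<theta>\<bar> \<le> lam + dbar"
              using fe i1 by blast
            moreover have "\<bar>snd (data p (Suc i))\<bar> \<le> ?M" using dy by simp
            ultimately show ?thesis using ll e0 by simp
          qed
          then have "Ssum ph N0 g \<le> real (card {..<N0}) * (?M + ?lam0 + dbar)"
            unfolding Ssum_def by (rule sum_bounded_above)
          then show ?thesis by simp
        qed
        then have tb: "\<forall>j<?L. \<bar>\<theta>' ! j\<bar> \<le> R"
          using gb K0 unfolding \<theta>'_def R_def by (auto intro: order_trans mult_left_mono)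
        have "cost (?V p) dbar \<theta>' \<le> lam + \<eta> / 2"
          unfolding cost_def
        proof (rule cSUP_least)
          show "?V p \<noteq> {}" using ne[OF p1] by blast
        next
          fix v assume v: "v \<in> ?V p"
          then obtain i where i: "i \<in> {1..Nb}" and vd: "vdist (data p i) v \<le> \<beta>" using Nb by blast
          have i1: "i \<ge> 1" "i \<in> {1..N}" using i unfolding N_def by auto
          obtain \<phi> y where vv: "v = (\<phi>, y)" by force
          have vl: "length \<phi> = ?L"
            using V_bound[OF Xb Ub v[unfolded vv]] by simp
          from vdist_comp[OF vd] have c1: "\<forall>j<?L. \<bar>fst (data p i) ! j - \<phi> ! j\<bar> \<le> \<beta>"
            and c2: "\<bar>snd (data p i) - y\<bar> \<le> \<beta>" using dlen[OF i1(1)] unfolding vv by auto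
          have "\<bar>ip (fst (data p i)) \<theta>' - ip \<phi> \<theta>'\<bar> \<le> real ?L * (\<beta> * R)"
            by (rule ip_diff_bound[OF dlen[OF i1(1)] vl c1 tb])
          moreover have "\<bar>snd (data p i) - ip (fst (data p i)) \<theta>'\<bar> \<le> lam + dbar"
            using fe i1 ipeq[OF i1(1)] by simp
          ultimately have "\<bar>y - ip \<phi> \<theta>'\<bar> - dbar \<le> lam + (\<beta> + real ?L * (\<beta> * R))"
            using c2 by linarith
          then show "\<bar>snd v - ip (fst v) \<theta>'\<bar> - dbar \<le> lam + \<eta> / 2" unfolding vv bR by simp
        qed
        moreover have "?lp p \<le> cost (?V p) dbar \<theta>'" by (rule lp_le[OF p1 th'])
        ultimately show False using ll e0 by simp
      qed
    qed
    then show ?thesis unfolding lambda_low_def by blast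
  qed
  show ?thesis using part1 part2 part3 by blast
qed

end
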